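(* Consider problem (P) under the standing assumptions stated in the context, and suppose (P) is solvable. Then (P) has a unique globally optimal solution if and only if $k_j>0$ for every $j\in\{1,\dots,n\}$.
   Context: Max-plus algebra: $\mathbb{R}_{\max}=\mathbb{R}\cup\{-\infty\}$ with $a\oplus b=\max\{a,b\}$ and $a\otimes b=a+b$; $\varepsilon=-\infty$. For $\mathbf{A}=(a_{ij})\in\mathbb{R}_{\max}^{m\times n}$ and $\mathbf{x}=(x_j)\in\mathbb{R}^n$, $\mathbf{A}\otimes\mathbf{x}$ is the vector with $i$th component $F_i(\mathbf{x})=\max_{1\le j\le n}(a_{ij}+x_j)$, with $r+(-\infty)=-\infty$. Vectors are compared componentwise. Problem (P): given $\mathbf{A}=(a_{ij})\in\mathbb{R}_{\max}^{m\times n}$, reals $k_1,\dots,k_n\ge 0$ not all zero, and $c\in\mathbb{R}$, let $\mathcal{X}=\{\mathbf{x}\in\mathbb{R}^n : \sum_{j=1}^n k_jx_j=c\}$ and $F(\mathbf{x})=\mathbf{A}\otimes\mathbf{x}$. A point $\tilde{\mathbf{x}}\in\mathcal{X}$ is a globally optimal solution of (P) if $F(\mathbf{x})\ge F(\tilde{\mathbf{x}})$ componentwise for every $\mathbf{x}\in\mathcal{X}$; (P) is solvable if a globally optimal solution exists. Standing assumptions: (1) no row of $\mathbf{A}$ consists entirely of $-\infty$ entries; (2) if the $j$th column of $\mathbf{A}$ consists entirely of $-\infty$ entries, then $k_j>0$. *)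

theory Defs
  imports "HOL-Analysis.Analysis" "HOL-Library.Extended_Real"
begin

text \<open>A matrix A in R_max^{m x n} is a function
  A :: nat => nat => ereal with indices i in {1..m}, j in {1..n}; entries lie in
  R \<union> {-\<infinity>}, i.e. are never +\<infinity>. Vectors x in R^n are functions
  nat => real, taken to be 0 outside {1..n} (so that equality of vectors is
  plain equality of functions).\<close>

definition maxplus_matrix :: "nat \<Rightarrow> nat \<Rightarrow> (nat \<Rightarrow> nat \<Rightarrow> ereal) \<Rightarrow> bool" where
  "maxplus_matrix m n A \<longleftrightarrow> (\<forall>i\<in>{1..m}. \<forall>j\<in>{1..n}. A i j \<noteq> \<infinity>)"

definition mp_F :: "nat \<Rightarrow> (nat \<Rightarrow> nat \<Rightarrow> ereal) \<Rightarrow> (nat \<Rightarrow> real) \<Rightarrow> nat \<Rightarrow> ereal" where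
  "mp_F n A x i = Max ((\<lambda>j. A i j + ereal (x j)) ` {1..n})"

definition feasible :: "nat \<Rightarrow> (nat \<Rightarrow> real) \<Rightarrow> real \<Rightarrow> (nat \<Rightarrow> real) set" where
  "feasible n k c = {x. (\<forall>j. j \<notin> {1..n} \<longrightarrow> x j = 0) \<and> (\<Sum>j=1..n. k j * x j) = c}"

definition glob_opt ::
  "nat \<Rightarrow> nat \<Rightarrow> (nat \<Rightarrow> nat \<Rightarrow> ereal) \<Rightarrow> (nat \<Rightarrow> real) \<Rightarrow> real \<Rightarrow> (nat \<Rightarrow> real) \<Rightarrow> bool" where
  "glob_opt m n A k c xt \<longleftrightarrow> xt \<in> feasible n k c \<and>
     (\<forall>x\<in>feasible n k c. \<forall>i\<in>{1..m}. mp_F n A x i \<ge> mp_F n A xt i)"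

definition solvable ::
  "nat \<Rightarrow> nat \<Rightarrow> (nat \<Rightarrow> nat \<Rightarrow> ereal) \<Rightarrow> (nat \<Rightarrow> real) \<Rightarrow> real \<Rightarrow> bool" where
  "solvable m n A k c \<longleftrightarrow> (\<exists>xt. glob_opt m n A k c xt)"

end

theory Submission
  imports Defs
begin

lemma F_ge: "j \<in> {1..n} \<Longrightarrow> A i j + ereal (x j) \<le> mp_F n A x i"
  unfolding mp_F_def by (rule Max_ge) auto

lemma F_in: "n \<ge> 1 \<Longrightarrow> \<exists>j\<in>{1..n}. mp_F n A x i = A i j + ereal (x j)"
proof -
  assume "n \<ge> 1"
  then have "mp_F n A x i \<in> (\<lambda>j. A i j + ereal (x j)) ` {1..n}"
    unfolding mp_F_def by (intro Max_in) auto
  then show ?thesis by auto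
qed

lemma F_mono: "n \<ge> 1 \<Longrightarrow> (\<forall>j\<in>{1..n}. x j \<le> y j) \<Longrightarrow> mp_F n A x i \<le> mp_F n A y i"
proof -
  assume n: "n \<ge> 1" and le: "\<forall>j\<in>{1..n}. x j \<le> y j"
  obtain j where j: "j \<in> {1..n}" "mp_F n A x i = A i j + ereal (x j)" using F_in[OF n] by blast
  have "A i j + ereal (x j) \<le> A i j + ereal (y j)" using le j(1) by (intro add_left_mono) auto
  also have "\<dots> \<le> mp_F n A y i" using F_ge j(1) by blast
  finally show ?thesis using j by simp
qed

theorem theorem3:
  fixes m n :: nat and A :: "nat \<Rightarrow> nat \<Rightarrow> ereal" and k :: "nat \<Rightarrow> real" and c :: real
  assumes "m \<ge> 1" and "n \<ge> 1"
    and "maxplus_matrix m n A"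
    and "\<forall>j\<in>{1..n}. k j \<ge> 0"
    and "\<exists>j\<in>{1..n}. k j \<noteq> 0"
    and "\<forall>i\<in>{1..m}. \<exists>j\<in>{1..n}. A i j \<noteq> -\<infinity>"
    and "\<forall>j\<in>{1..n}. (\<forall>i\<in>{1..m}. A i j = -\<infinity>) \<longrightarrow> k j > 0"
    and "solvable m n A k c"
  shows "(\<exists>!xt. glob_opt m n A k c xt) \<longleftrightarrow> (\<forall>j\<in>{1..n}. k j > 0)"
proof
  assume U: "\<exists>!xt. glob_opt m n A k c xt"
  show "\<forall>j\<in>{1..n}. k j > 0"
  proof (rule ccontr)
    assume "\<not> (\<forall>j\<in>{1..n}. k j > 0)"
    then obtain j where j: "j \<in> {1..n}" "k j = 0" using assms(4) by force
    obtain xt where xt: "glob_opt m n A k c xt" using U by blast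
    define x where "x = xt(j := xt j - 1)"
    have fx: "x \<in> feasible n k c"
    proof -
      have "(\<Sum>l=1..n. k l * x l) = (\<Sum>l=1..n. k l * xt l)"
        using j by (intro sum.cong) (auto simp: x_def)
      then show ?thesis using xt j unfolding glob_opt_def feasible_def x_def by auto
    qed
    have "glob_opt m n A k c x"
      unfolding glob_opt_def
    proof (intro conjI ballI fx)
      fix y i assume y: "y \<in> feasible n k c" and i: "i \<in> {1..m}"
      have "mp_F n A x i \<le> mp_F n A xt i"
        using assms(2) by (intro F_mono) (auto simp: x_def)
      also have "\<dots> \<le> mp_F n A y i" using xt y i unfolding glob_opt_def by blast
      finally show "mp_F n A x i \<le> mp_F n A y i" .
    qed
    moreover have "x \<noteq> xt" proof
      assume "x = xt" then have "x j = xt j" by simp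
      then show False by (simp add: x_def)
    qed
    ultimately show False using U xt by blast
  qed
next
  assume K: "\<forall>j\<in>{1..n}. k j > 0"
  obtain xt where xt: "glob_opt m n A k c xt" using assms(8) unfolding solvable_def by blast
  show "\<exists>!xt. glob_opt m n A k c xt"
  proof (intro ex1I[of _ xt] xt)
    fix yt assume yt: "glob_opt m n A k c yt"
    show "yt = xt"
    proof (rule ccontr)
      assume ne: "yt \<noteq> xt"
      have fx: "xt \<in> feasible n k c" and fy: "yt \<in> feasible n k c"
        using xt yt unfolding glob_opt_def by auto
      have "\<exists>j0\<in>{1..n}. yt j0 \<noteq> xt j0"
      proof (rule ccontr)
        assume "\<not> (\<exists>j0\<in>{1..n}. yt j0 \<noteq> xt j0)"
        then have "\<And>j. yt j = xt j" using fx fy unfolding feasible_def by (metis (mono_tags, lifting) mem_Collect_eq)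
        then show False using ne by blast
      qed
      then obtain j0 where j0: "j0 \<in> {1..n}" "yt j0 \<noteq> xt j0" by blast
      define mx where "mx = (\<lambda>j. max (xt j) (yt j))"
      define S where "S = (\<Sum>j=1..n. k j)"
      define M where "M = (\<Sum>j=1..n. k j * mx j)"
      have S: "S > 0" unfolding S_def using K assms(2) by (intro sum_pos) auto
      have cx: "(\<Sum>j=1..n. k j * xt j) = c" and cy: "(\<Sum>j=1..n. k j * yt j) = c"
        using fx fy unfolding feasible_def by auto
      have "M > c"
      proof (cases "xt j0 < yt j0")
        case True
        have "(\<Sum>j=1..n. k j * xt j) < M" unfolding M_def
        proof (rule sum_strict_mono_ex1)
          show "finite {1..n}" by simp
          show "\<forall>x\<in>{1..n}. k x * xt x \<le> k x * mx x"
            using K by (auto simp: mx_def intro: mult_left_mono less_imp_le)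
          show "\<exists>a\<in>{1..n}. k a * xt a < k a * mx a"
            using True j0 K by (intro bexI[of _ j0]) (auto simp: mx_def)
        qed
        then show ?thesis using cx by simp
      next
        case False
        then have F: "yt j0 < xt j0" using j0 by auto
        have "(\<Sum>j=1..n. k j * yt j) < M" unfolding M_def
        proof (rule sum_strict_mono_ex1)
          show "finite {1..n}" by simp
          show "\<forall>x\<in>{1..n}. k x * yt x \<le> k x * mx x"
            using K by (auto simp: mx_def intro: mult_left_mono less_imp_le)
          show "\<exists>a\<in>{1..n}. k a * yt a < k a * mx a"
            using F j0 K by (intro bexI[of _ j0]) (auto simp: mx_def)
        qed
        then show ?thesis using cy by simp
      qed
      define d where "d = (M - c) / S"
      have d: "d > 0" unfolding d_def using S \<open>M > c\<close> by simp
      define w where "w = (\<lambda>j. if j \<in> {1..n} then mx j - d else 0)"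
      have "(\<Sum>j=1..n. k j * w j) = (\<Sum>j=1..n. k j * mx j - d * k j)"
        by (intro sum.cong) (auto simp: w_def algebra_simps)
      also have "\<dots> = M - d * S" unfolding M_def S_def by (simp add: sum_subtractf sum_distrib_left)
      also have "\<dots> = c" unfolding d_def using S by simp
      finally have fw: "w \<in> feasible n k c" unfolding feasible_def w_def by auto
      have i1: "(1::nat) \<in> {1..m}" using assms(1) by auto
      have ge: "mp_F n A w 1 \<ge> mp_F n A xt 1" using xt fw i1 unfolding glob_opt_def by blast
      have yx: "mp_F n A yt 1 \<le> mp_F n A xt 1" using yt fx i1 unfolding glob_opt_def by blast
      obtain j where j: "j \<in> {1..n}" "mp_F n A w 1 = A 1 j + ereal (w j)" using F_in[OF assms(2)] by blast
      obtain j1 where j1: "j1 \<in> {1..n}" "A 1 j1 \<noteq> -\<infinity>" using assms(6) i1 by blast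
      have "A 1 j1 + ereal (xt j1) \<le> mp_F n A xt 1" using F_ge j1(1) by blast
      moreover have "A 1 j1 + ereal (xt j1) > -\<infinity>" using j1(2) by (cases "A 1 j1") auto
      ultimately have fin: "mp_F n A xt 1 > -\<infinity>" by (rule less_le_trans[rotated])
      have "A 1 j + ereal (mx j) \<le> mp_F n A xt 1"
      proof (cases "xt j \<le> yt j")
        case True
        then have "A 1 j + ereal (mx j) = A 1 j + ereal (yt j)" by (simp add: mx_def)
        also have "\<dots> \<le> mp_F n A yt 1" using F_ge j(1) by blast
        finally show ?thesis using yx by simp
      next
        case False
        then have "A 1 j + ereal (mx j) = A 1 j + ereal (xt j)" by (simp add: mx_def)
        also have "\<dots> \<le> mp_F n A xt 1" using F_ge j(1) by blast
        finally show ?thesis .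
      qed
      moreover have "mp_F n A xt 1 \<le> A 1 j + ereal (mx j - d)" using ge j by (simp add: w_def)
      moreover have "A 1 j \<noteq> \<infinity>" using assms(3) i1 j(1) unfolding maxplus_matrix_def by blast
      ultimately have "A 1 j + ereal (mx j) \<le> A 1 j + ereal (mx j - d)" "A 1 j \<noteq> \<infinity>" by auto
      moreover have "A 1 j \<noteq> -\<infinity>"
      proof
        assume "A 1 j = -\<infinity>"
        then have "A 1 j + ereal (mx j - d) = -\<infinity>" by simp
        then show False using \<open>mp_F n A xt 1 \<le> A 1 j + ereal (mx j - d)\<close> fin by simp
      qed
      ultimately show False using d by (cases "A 1 j") auto
    qed
  qed
qed

end
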